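(* In the two-bus model of the context, let $\boldsymbol\omega=(\overline{\mathbf q},\mathbf d)$ and $\boldsymbol\omega'=(\overline{\mathbf q},\mathbf d')$ be instances with the same generation capacities, both feasible for \textsf{ED-2b} and \textsf{SCED-2b}, such that $d_2'=d_2$, $d_1'\ge d_1$, $d_1+d_2>0$, and $\overline q_1\ge d_1'+d_2$. Then $\mathsf{PoS}(\boldsymbol\omega')\le\mathsf{PoS}(\boldsymbol\omega)$.
   Context: Two-bus network: buses $v_1,v_2$ joined by two parallel lines $e_1,e_2$ with susceptances $B_1,B_2>0$ and thermal limits $\overline f_1,\overline f_2>0$. Bus $i\in\{1,2\}$ has a generator with capacity $\overline q_i\ge 0$ and linear cost $\alpha_i q_i$, and a demand $d_i\ge 0$; throughout $0<\alpha_1\le\alpha_2$ (bus 1 is the cheap bus). An instance is $\boldsymbol\omega=(\overline{\mathbf q},\mathbf d)$ with $\overline{\mathbf q}=(\overline q_1,\overline q_2)$, $\mathbf d=(d_1,d_2)$. Define $f^{\mathsf{ed}}:=(B_1+B_2)\min\{\overline f_1/B_1,\overline f_2/B_2\}$ and $f^{\mathsf{sc}}:=\min\{\overline f_1,\overline f_2\}$ (note $f^{\mathsf{sc}}\le f^{\mathsf{ed}}$). The economic dispatch problem \textsf{ED-2b} is: minimize $\alpha_1q_1+\alpha_2q_2$ over $(q_1,q_2)$ subject to $0\le q_1\le\overline q_1$, $0\le q_2\le\overline q_2$, $q_1+q_2=d_1+d_2$, and $-f^{\mathsf{ed}}\le q_1-d_1\le f^{\mathsf{ed}}$. The security-constrained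 problem \textsf{SCED-2b} is the same problem with the additional constraint $-f^{\mathsf{sc}}\le q_1-d_1\le f^{\mathsf{sc}}$. Let $c^\star_{\mathsf{ed}}(\boldsymbol\omega)$ and $c^\star_{\mathsf{sc}}(\boldsymbol\omega)$ be the optimal values of \textsf{ED-2b} and \textsf{SCED-2b} for an instance $\boldsymbol\omega$ feasible for both. The price of security of $\boldsymbol\omega$ is $\mathsf{PoS}(\boldsymbol\omega):=c^\star_{\mathsf{sc}}(\boldsymbol\omega)/c^\star_{\mathsf{ed}}(\boldsymbol\omega)$. *)

theory Defs
  imports "HOL-Analysis.Analysis"
begin

text \<open>Two-bus network. Line data: susceptances B1 B2, thermal limits f1 f2.
  Instance: capacities (qb1, qb2) and demands (d1, d2).\<close>

definition f_ed :: "real \<Rightarrow> real \<Rightarrow> real \<Rightarrow> real \<Rightarrow> real" where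
  "f_ed B1 B2 f1 f2 = (B1 + B2) * min (f1 / B1) (f2 / B2)"

definition f_sc :: "real \<Rightarrow> real \<Rightarrow> real" where
  "f_sc f1 f2 = min f1 f2"

definition ed_feas :: "real \<Rightarrow> real \<times> real \<Rightarrow> real \<times> real \<Rightarrow> (real \<times> real) set" where
  "ed_feas F qb d = {(q1, q2). 0 \<le> q1 \<and> q1 \<le> fst qb \<and> 0 \<le> q2 \<and> q2 \<le> snd qb
      \<and> q1 + q2 = fst d + snd d \<and> - F \<le> q1 - fst d \<and> q1 - fst d \<le> F}"

definition ED_feasible_set where
  "ED_feasible_set B1 B2 f1 f2 qb d = ed_feas (f_ed B1 B2 f1 f2) qb d"

definition SCED_feasible_set where
  "SCED_feasible_set B1 B2 f1 f2 qb d =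
     ed_feas (f_ed B1 B2 f1 f2) qb d \<inter>
     {(q1, q2). - f_sc f1 f2 \<le> q1 - fst d \<and> q1 - fst d \<le> f_sc f1 f2}"

definition cost :: "real \<Rightarrow> real \<Rightarrow> real \<times> real \<Rightarrow> real" where
  "cost a1 a2 q = a1 * fst q + a2 * snd q"

text \<open>Optimal values (infimum of the cost over the feasible set; attained for
  feasible instances since the feasible sets are nonempty compact polytopes).\<close>
definition c_ed where
  "c_ed a1 a2 B1 B2 f1 f2 qb d = (INF q \<in> ED_feasible_set B1 B2 f1 f2 qb d. cost a1 a2 q)"

definition c_sc where
  "c_sc a1 a2 B1 B2 f1 f2 qb d = (INF q \<in> SCED_feasible_set B1 B2 f1 f2 qb d. cost a1 a2 q)"

definition PoS where
  "PoS a1 a2 B1 B2 f1 f2 qb d = c_sc a1 a2 B1 B2 f1 f2 qb d / c_ed a1 a2 B1 B2 f1 f2 qb d"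

end

theory Submission
  imports Defs
begin

lemma opt_val:
  assumes F: "F \<ge> 0" and ne: "ed_feas F qb d \<noteq> {}" and cap: "fst qb \<ge> fst d + snd d"
    and a: "0 < a1" "a1 \<le> a2" and dd: "fst d \<ge> 0" "snd d \<ge> 0"
  shows "(INF q \<in> ed_feas F qb d. cost a1 a2 q) =
     a1 * (fst d + min (snd d) F) + a2 * (snd d - min (snd d) F)"
proof -
  obtain p1 p2 where p: "(p1,p2) \<in> ed_feas F qb d" using ne by auto
  define m where "m = min (snd d) F"
  have pt: "(fst d + m, snd d - m) \<in> ed_feas F qb d"
    using p F cap dd unfolding ed_feas_def m_def by auto
  have lb: "cost a1 a2 (fst d + m, snd d - m) \<le> cost a1 a2 q" if "q \<in> ed_feas F qb d" for q
  proof -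
    obtain q1 q2 where q: "q = (q1,q2)" by fastforce
    have "q1 \<le> fst d + m" using that q unfolding ed_feas_def m_def by auto
    moreover have "q2 = fst d + snd d - q1" using that q unfolding ed_feas_def by auto
    ultimately have "cost a1 a2 q - cost a1 a2 (fst d + m, snd d - m) = a1*q1 + a2*(fst d + snd d - q1) - (a1*(fst d + m) + a2*(snd d - m))"
      using q unfolding cost_def by simp
    also have "\<dots> = (a2 - a1) * (fst d + m - q1)" by (simp add: algebra_simps)
    finally have "cost a1 a2 q - cost a1 a2 (fst d + m, snd d - m) = (a2 - a1) * (fst d + m - q1)" .
    moreover have "(a2 - a1) * (fst d + m - q1) \<ge> 0" using a \<open>q1 \<le> fst d + m\<close> by simp
    ultimately show ?thesis by linarith
  qed
  have "(INF q \<in> ed_feas F qb d. cost a1 a2 q) = cost a1 a2 (fst d + m, snd d - m)"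
    by (rule cInf_eq_minimum) (use pt lb in auto)
  thus ?thesis by (simp add: cost_def m_def)
qed

theorem lemma2:
  fixes a1 a2 B1 B2 f1 f2 :: real and qb d d' :: "real \<times> real"
  assumes "B1 > 0" "B2 > 0" "f1 > 0" "f2 > 0"
    and "0 < a1" "a1 \<le> a2"
    and "fst qb \<ge> 0" "snd qb \<ge> 0"
    and "fst d \<ge> 0" "snd d \<ge> 0" "fst d' \<ge> 0" "snd d' \<ge> 0"
    and "ED_feasible_set B1 B2 f1 f2 qb d \<noteq> {}"
    and "SCED_feasible_set B1 B2 f1 f2 qb d \<noteq> {}"
    and "ED_feasible_set B1 B2 f1 f2 qb d' \<noteq> {}"
    and "SCED_feasible_set B1 B2 f1 f2 qb d' \<noteq> {}"
    and "snd d' = snd d" "fst d' \<ge> fst d" "fst d + snd d > 0"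
    and "fst qb \<ge> fst d' + snd d"
  shows "PoS a1 a2 B1 B2 f1 f2 qb d' \<le> PoS a1 a2 B1 B2 f1 f2 qb d"
proof -
  define E where "E = f_ed B1 B2 f1 f2"
  define S where "S = f_sc f1 f2"
  have S0: "S \<ge> 0" using assms unfolding S_def f_sc_def by auto
  have SE: "S \<le> E"
  proof (cases "f1/B1 \<le> f2/B2")
    case True
    have "(B1+B2)*(f1/B1) = f1 + B2*(f1/B1)" using assms by (simp add: field_simps)
    moreover have "B2*(f1/B1) \<ge> 0" using assms by simp
    ultimately show ?thesis using True unfolding S_def E_def f_sc_def f_ed_def by auto
  next
    case False
    have "(B1+B2)*(f2/B2) = f2 + B1*(f2/B2)" using assms by (simp add: field_simps)
    moreover have "B1*(f2/B2) \<ge> 0" using assms by simp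
    ultimately show ?thesis using False unfolding S_def E_def f_sc_def f_ed_def by auto
  qed
  have SCeq: "SCED_feasible_set B1 B2 f1 f2 qb x = ed_feas S qb x" for x
    using SE unfolding SCED_feasible_set_def ed_feas_def S_def E_def by auto
  have EDeq: "ED_feasible_set B1 B2 f1 f2 qb x = ed_feas E qb x" for x
    unfolding ED_feasible_set_def E_def by simp
  define dd1 d2 d1' where "dd1 = fst d" and "d2 = snd d" and "d1' = fst d'"
  define ms me where "ms = min d2 S" and "me = min d2 E"
  have capd: "fst qb \<ge> fst d + snd d" using assms by simp
  have capd': "fst qb \<ge> fst d' + snd d'" using assms by simp
  have dnn: "fst d \<ge> 0" "snd d \<ge> 0" "fst d' \<ge> 0" "snd d' \<ge> 0" using assms by auto
  have E0: "E \<ge> 0" using S0 SE by linarith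
  have ne1: "ed_feas E qb d \<noteq> {}" using assms(13) EDeq by simp
  have ne2: "ed_feas S qb d \<noteq> {}" using assms(14) SCeq by simp
  have ne3: "ed_feas E qb d' \<noteq> {}" using assms(15) EDeq by simp
  have ne4: "ed_feas S qb d' \<noteq> {}" using assms(16) SCeq by simp
  have d2': "snd d' = d2" using assms(17) d2_def by simp
  have ced: "c_ed a1 a2 B1 B2 f1 f2 qb d = a1*(dd1+me) + a2*(d2-me)"
    unfolding c_ed_def EDeq dd1_def d2_def me_def
    by (rule opt_val[OF E0 ne1 capd assms(5,6) dnn(1,2)])
  have csc: "c_sc a1 a2 B1 B2 f1 f2 qb d = a1*(dd1+ms) + a2*(d2-ms)"
    unfolding c_sc_def SCeq dd1_def d2_def ms_def
    by (rule opt_val[OF S0 ne2 capd assms(5,6) dnn(1,2)])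
  have ced': "c_ed a1 a2 B1 B2 f1 f2 qb d' = a1*(d1'+me) + a2*(d2-me)"
    unfolding c_ed_def EDeq d1'_def d2'[symmetric] me_def
    by (rule opt_val[OF E0 ne3 capd' assms(5,6) dnn(3,4)])
  have csc': "c_sc a1 a2 B1 B2 f1 f2 qb d' = a1*(d1'+ms) + a2*(d2-ms)"
    unfolding c_sc_def SCeq d1'_def d2'[symmetric] ms_def
    by (rule opt_val[OF S0 ne4 capd' assms(5,6) dnn(3,4)])
  define A where "A = a1*ms + a2*(d2-ms)"
  define B where "B = a1*me + a2*(d2-me)"
  have msme: "ms \<le> me" using SE unfolding ms_def me_def by auto
  have "A - B = (a2 - a1)*(me - ms)" unfolding A_def B_def by (simp add: algebra_simps)
  moreover have "(a2 - a1)*(me - ms) \<ge> 0" using msme assms(6) by simp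
  ultimately have AB: "B \<le> A" by linarith
  have me2: "me \<le> d2" unfolding me_def by auto
  have "B - a1*d2 = (a2 - a1)*(d2 - me)" unfolding B_def by (simp add: algebra_simps)
  moreover have "(a2 - a1)*(d2 - me) \<ge> 0" using me2 assms(6) by simp
  ultimately have Bge: "B \<ge> a1 * d2" by linarith
  have pos: "a1*dd1 + B > 0"
  proof -
    have "a1*dd1 + a1*d2 > 0" using assms unfolding dd1_def d2_def
      by (metis distrib_left mult_pos_pos)
    thus ?thesis using Bge by linarith
  qed
  have x: "a1*dd1 \<le> a1*d1'" using assms unfolding dd1_def d1'_def by simp
  have "(a1*d1' + A)/(a1*d1' + B) \<le> (a1*dd1 + A)/(a1*dd1 + B)"
  proof -
    have p2: "a1*d1' + B > 0" using pos x by linarith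
    have "(a1*d1' + A)*(a1*dd1 + B) \<le> (a1*dd1 + A)*(a1*d1' + B)"
    proof -
      have "(a1*dd1 + A)*(a1*d1' + B) - (a1*d1' + A)*(a1*dd1 + B) = (A - B)*(a1*d1' - a1*dd1)"
        by (simp add: algebra_simps)
      moreover have "(A - B)*(a1*d1' - a1*dd1) \<ge> 0" using AB x by simp
      ultimately show ?thesis by linarith
    qed
    thus ?thesis using pos p2 by (simp add: divide_simps)
  qed
  moreover have "a1*(dd1+ms) + a2*(d2-ms) = a1*dd1 + A" "a1*(dd1+me) + a2*(d2-me) = a1*dd1 + B"
    "a1*(d1'+ms) + a2*(d2-ms) = a1*d1' + A" "a1*(d1'+me) + a2*(d2-me) = a1*d1' + B"
    unfolding A_def B_def by (simp_all add: algebra_simps)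
  ultimately show ?thesis unfolding PoS_def using ced csc ced' csc' by simp
qed

end
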